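(* For every ordered field $C$, the theory $T_{\mathrm{Ham}}$ of independent dense Hamel spaces over $C$ is consistent, i.e., there exists an independent dense Hamel space over $C$.
   Context: Let $C$ be an ordered field. A $2$-ordered $C$-vector space is a $C$-vector space $G$ with two total orderings $<_0,<_1$ such that $G$ is an ordered $C$-vector space with respect to each. Put $G_\infty=G\cup\{\infty\}$, with $G<_0\infty$, $G<_1\infty$. A Hamel valuation on $G$ is a map $v:G\to G_\infty$ such that for all $x,y\in G$ and $\lambda\in C^{\times}$: $v(x)=\infty$ iff $x=0$; $v(x+y)\ge_0\min_0(v(x),v(y))$; $v(\lambda x)=v(x)$; if $0<_1x<_1y$ then $v(x)\ge_0v(y)$; $v(v(x))=v(x)$ (with $v(\infty)=\infty$); and $v(x)>_10$. A Hamel space is such a pair $(G,v)$. It is independent if for all $a_0,b_0,a_1,b_1\in G\cup\{\pm\infty\}$ with $a_0<_0b_0$ and $a_1<_1b_1$ there is $z\in G$ with $a_0<_0z<_0b_0$ and $a_1<_1z<_1b_1$; it is dense if for all $a<_0b$ in $G$ there is $c\in G$ with $a<_0v(c)<_0b$. *)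

theory Defs
  imports Main
begin

definition vector_space_on ::
  "'g set \<Rightarrow> ('g \<Rightarrow> 'g \<Rightarrow> 'g) \<Rightarrow> 'g \<Rightarrow> ('c::field \<Rightarrow> 'g \<Rightarrow> 'g) \<Rightarrow> bool" where
  "vector_space_on G add zero scal \<longleftrightarrow>
     zero \<in> G \<and>
     (\<forall>x\<in>G. \<forall>y\<in>G. add x y \<in> G) \<and>
     (\<forall>a. \<forall>x\<in>G. scal a x \<in> G) \<and>
     (\<forall>x\<in>G. \<forall>y\<in>G. \<forall>z\<in>G. add (add x y) z = add x (add y z)) \<and>
     (\<forall>x\<in>G. \<forall>y\<in>G. add x y = add y x) \<and>
     (\<forall>x\<in>G. add x zero = x) \<and>
     (\<forall>x\<in>G. \<exists>y\<in>G. add x y = zero) \<and>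
     (\<forall>a b. \<forall>x\<in>G. scal (a + b) x = add (scal a x) (scal b x)) \<and>
     (\<forall>a. \<forall>x\<in>G. \<forall>y\<in>G. scal a (add x y) = add (scal a x) (scal a y)) \<and>
     (\<forall>a b. \<forall>x\<in>G. scal (a * b) x = scal a (scal b x)) \<and>
     (\<forall>x\<in>G. scal 1 x = x)"

definition strict_total_order_on :: "'g set \<Rightarrow> ('g \<Rightarrow> 'g \<Rightarrow> bool) \<Rightarrow> bool" where
  "strict_total_order_on G lt \<longleftrightarrow>
     (\<forall>x\<in>G. \<not> lt x x) \<and>
     (\<forall>x\<in>G. \<forall>y\<in>G. \<forall>z\<in>G. lt x y \<longrightarrow> lt y z \<longrightarrow> lt x z) \<and>
     (\<forall>x\<in>G. \<forall>y\<in>G. x \<noteq> y \<longrightarrow> lt x y \<or> lt y x)"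

definition ordered_vector_space_on ::
  "'g set \<Rightarrow> ('g \<Rightarrow> 'g \<Rightarrow> 'g) \<Rightarrow> 'g \<Rightarrow> ('c::linordered_field \<Rightarrow> 'g \<Rightarrow> 'g)
    \<Rightarrow> ('g \<Rightarrow> 'g \<Rightarrow> bool) \<Rightarrow> bool" where
  "ordered_vector_space_on G add zero scal lt \<longleftrightarrow>
     vector_space_on G add zero scal \<and>
     strict_total_order_on G lt \<and>
     (\<forall>x\<in>G. \<forall>y\<in>G. \<forall>z\<in>G. lt x y \<longrightarrow> lt (add x z) (add y z)) \<and>
     (\<forall>a::'c. \<forall>x\<in>G. \<forall>y\<in>G. 0 < a \<longrightarrow> lt x y \<longrightarrow> lt (scal a x) (scal a y))"

text \<open>Orderings on G_\<infinity> = G \<union> {\<infinity>}, represented as option with None = \<infinity> on top.\<close>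
fun inf_less :: "('g \<Rightarrow> 'g \<Rightarrow> bool) \<Rightarrow> 'g option \<Rightarrow> 'g option \<Rightarrow> bool" where
  "inf_less lt (Some a) (Some b) = lt a b"
| "inf_less lt (Some a) None = True"
| "inf_less lt None _ = False"

definition inf_le :: "('g \<Rightarrow> 'g \<Rightarrow> bool) \<Rightarrow> 'g option \<Rightarrow> 'g option \<Rightarrow> bool" where
  "inf_le lt a b \<longleftrightarrow> inf_less lt a b \<or> a = b"

fun v_ext :: "('g \<Rightarrow> 'g option) \<Rightarrow> 'g option \<Rightarrow> 'g option" where
  "v_ext v None = None"
| "v_ext v (Some g) = v g"

definition hamel_valuation ::
  "'g set \<Rightarrow> ('g \<Rightarrow> 'g \<Rightarrow> 'g) \<Rightarrow> 'g \<Rightarrow> ('c::linordered_field \<Rightarrow> 'g \<Rightarrow> 'g)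
    \<Rightarrow> ('g \<Rightarrow> 'g \<Rightarrow> bool) \<Rightarrow> ('g \<Rightarrow> 'g \<Rightarrow> bool) \<Rightarrow> ('g \<Rightarrow> 'g option) \<Rightarrow> bool" where
  "hamel_valuation G add zero scal lt0 lt1 v \<longleftrightarrow>
     (\<forall>x\<in>G. v x = None \<or> (\<exists>g\<in>G. v x = Some g)) \<and>
     (\<forall>x\<in>G. v x = None \<longleftrightarrow> x = zero) \<and>
     (\<forall>x\<in>G. \<forall>y\<in>G. inf_le lt0 (v x) (v (add x y)) \<or> inf_le lt0 (v y) (v (add x y))) \<and>
     (\<forall>a::'c. \<forall>x\<in>G. a \<noteq> 0 \<longrightarrow> v (scal a x) = v x) \<and>
     (\<forall>x\<in>G. \<forall>y\<in>G. lt1 zero x \<longrightarrow> lt1 x y \<longrightarrow> inf_le lt0 (v y) (v x)) \<and>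
     (\<forall>x\<in>G. v_ext v (v x) = v x) \<and>
     (\<forall>x\<in>G. inf_less lt1 (Some zero) (v x))"

definition hamel_space ::
  "'g set \<Rightarrow> ('g \<Rightarrow> 'g \<Rightarrow> 'g) \<Rightarrow> 'g \<Rightarrow> ('c::linordered_field \<Rightarrow> 'g \<Rightarrow> 'g)
    \<Rightarrow> ('g \<Rightarrow> 'g \<Rightarrow> bool) \<Rightarrow> ('g \<Rightarrow> 'g \<Rightarrow> bool) \<Rightarrow> ('g \<Rightarrow> 'g option) \<Rightarrow> bool" where
  "hamel_space G add zero scal lt0 lt1 v \<longleftrightarrow>
     ordered_vector_space_on G add zero scal lt0 \<and>
     ordered_vector_space_on G add zero scal lt1 \<and>
     hamel_valuation G add zero scal lt0 lt1 v"

datatype 'g ext = NegInf | Fin 'g | PosInf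

fun ext_less :: "('g \<Rightarrow> 'g \<Rightarrow> bool) \<Rightarrow> 'g ext \<Rightarrow> 'g ext \<Rightarrow> bool" where
  "ext_less lt (Fin a) (Fin b) = lt a b"
| "ext_less lt NegInf b = (b \<noteq> NegInf)"
| "ext_less lt a PosInf = (a \<noteq> PosInf)"
| "ext_less lt _ _ = False"

definition in_ext :: "'g set \<Rightarrow> 'g ext \<Rightarrow> bool" where
  "in_ext G a \<longleftrightarrow> (\<forall>g. a = Fin g \<longrightarrow> g \<in> G)"

definition independent ::
  "'g set \<Rightarrow> ('g \<Rightarrow> 'g \<Rightarrow> bool) \<Rightarrow> ('g \<Rightarrow> 'g \<Rightarrow> bool) \<Rightarrow> bool" where
  "independent G lt0 lt1 \<longleftrightarrow>
     (\<forall>a0 b0 a1 b1. in_ext G a0 \<longrightarrow> in_ext G b0 \<longrightarrow> in_ext G a1 \<longrightarrow> in_ext G b1 \<longrightarrow>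
        ext_less lt0 a0 b0 \<longrightarrow> ext_less lt1 a1 b1 \<longrightarrow>
        (\<exists>z\<in>G. ext_less lt0 a0 (Fin z) \<and> ext_less lt0 (Fin z) b0 \<and>
               ext_less lt1 a1 (Fin z) \<and> ext_less lt1 (Fin z) b1))"

definition dense_hamel ::
  "'g set \<Rightarrow> ('g \<Rightarrow> 'g \<Rightarrow> bool) \<Rightarrow> ('g \<Rightarrow> 'g option) \<Rightarrow> bool" where
  "dense_hamel G lt0 v \<longleftrightarrow>
     (\<forall>a\<in>G. \<forall>b\<in>G. lt0 a b \<longrightarrow>
        (\<exists>c\<in>G. inf_less lt0 (Some a) (v c) \<and> inf_less lt0 (v c) (Some b)))"

definition independent_dense_hamel_space ::
  "'g set \<Rightarrow> ('g \<Rightarrow> 'g \<Rightarrow> 'g) \<Rightarrow> 'g \<Rightarrow> ('c::linordered_field \<Rightarrow> 'g \<Rightarrow> 'g)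
    \<Rightarrow> ('g \<Rightarrow> 'g \<Rightarrow> bool) \<Rightarrow> ('g \<Rightarrow> 'g \<Rightarrow> bool) \<Rightarrow> ('g \<Rightarrow> 'g option) \<Rightarrow> bool" where
  "independent_dense_hamel_space G add zero scal lt0 lt1 v \<longleftrightarrow>
     hamel_space G add zero scal lt0 lt1 v \<and> independent G lt0 lt1 \<and> dense_hamel G lt0 v"

end

theory Submission
  imports Defs
begin


lemma pair_inj_ex: "\<exists>p::('c::linordered_field \<times> 'c) \<Rightarrow> 'c. inj p"
proof -
  have "\<not> finite (UNIV::'c set)" by (rule infinite_UNIV_char_0)
  hence "(card_of ((UNIV::'c set) \<times> (UNIV::'c set)), card_of (UNIV::'c set)) \<in> ordIso"
    by (rule card_of_Times_same_infinite)
  then obtain f where "bij_betw f ((UNIV::'c set) \<times> (UNIV::'c set)) (UNIV::'c set)"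
    using card_of_ordIso by blast
  thus ?thesis using bij_betw_imp_inj_on by fastforce
qed

definition hnz :: "'c::linordered_field \<Rightarrow> 'c" where
  "hnz y = (if 0 \<le> y then y + 1 else y)"

lemma hnz_nz: "hnz y \<noteq> 0"
  unfolding hnz_def by (auto simp: add_nonneg_eq_0_iff)

lemma hnz_inj: "hnz x = hnz y \<Longrightarrow> x = y"
  unfolding hnz_def by (auto split: if_splits)

primrec enc :: "('c::linordered_field \<times> 'c \<Rightarrow> 'c) \<Rightarrow> 'c list \<Rightarrow> 'c" where
  "enc p [] = 0"
| "enc p (x # xs) = hnz (p (x, enc p xs))"

lemma enc_inj: assumes "inj p" shows "enc p xs = enc p ys \<Longrightarrow> xs = ys"
proof (induction xs arbitrary: ys)
  case Nil thus ?case by (cases ys) (auto dest: sym simp: hnz_nz)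
next
  case (Cons x xs)
  thus ?case using assms by (cases ys) (auto simp: hnz_nz inj_eq dest: hnz_inj)
qed

lemma rc_ex: "\<exists>f::'c::linordered_field list \<Rightarrow> 'c. inj f \<and> (\<forall>s. f s \<noteq> 0)"
proof -
  obtain p :: "'c \<times> 'c \<Rightarrow> 'c" where p: "inj p" using pair_inj_ex by blast
  show ?thesis
    by (rule exI[of _ "\<lambda>s. hnz (enc p s)"]) (auto simp: inj_def hnz_nz dest: hnz_inj enc_inj[OF p])
qed

definition rc :: "'c::linordered_field list \<Rightarrow> 'c" where
  "rc = (SOME f. inj f \<and> (\<forall>s. f s \<noteq> 0))"

lemma rc_props: fixes s t :: "'c::linordered_field list"
  shows rc_inj: "rc s = rc t \<Longrightarrow> s = t" and rc_nz: "rc s \<noteq> 0"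
proof -
  have "inj (rc::'c list \<Rightarrow> 'c) \<and> (\<forall>s. (rc::'c list \<Rightarrow> 'c) s \<noteq> 0)"
    unfolding rc_def by (rule someI_ex[OF rc_ex])
  thus "rc s = rc t \<Longrightarrow> s = t" "rc s \<noteq> 0" by (auto simp: inj_def)
qed

lemma vandermonde:
  fixes r :: "'a \<Rightarrow> 'c::field"
  assumes "finite F" "inj_on r F" "\<forall>s\<in>F. r s \<noteq> 0"
    and "\<forall>n\<ge>N. (\<Sum>s\<in>F. mu s * r s ^ n) = 0"
  shows "\<forall>s\<in>F. mu s = 0"
  using assms
proof (induction F arbitrary: mu rule: finite_induct)
  case empty thus ?case by simp
next
  case (insert t F)
  have eq: "(\<Sum>s\<in>F. mu s * r s ^ n) = - (mu t * r t ^ n)" if "n \<ge> N" for n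
    using insert.prems(3) that insert.hyps by (simp add: eq_neg_iff_add_eq_0 add.commute)
  have "\<forall>n\<ge>N. (\<Sum>s\<in>F. (mu s * (r s - r t)) * r s ^ n) = 0"
  proof (intro allI impI)
    fix n assume "n \<ge> N"
    have "(\<Sum>s\<in>F. (mu s * (r s - r t)) * r s ^ n)
        = (\<Sum>s\<in>F. mu s * r s ^ Suc n) - r t * (\<Sum>s\<in>F. mu s * r s ^ n)"
      by (simp add: sum_subtractf sum_distrib_left algebra_simps)
    also have "\<dots> = 0" using eq[of n] eq[of "Suc n"] \<open>n \<ge> N\<close> by (simp add: algebra_simps)
    finally show "(\<Sum>s\<in>F. (mu s * (r s - r t)) * r s ^ n) = 0" .
  qed
  moreover have "inj_on r F" using insert.prems by (auto simp: inj_on_def)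
  ultimately have h: "\<forall>s\<in>F. mu s * (r s - r t) = 0"
    using insert.IH[of "\<lambda>s. mu s * (r s - r t)"] insert.prems by auto
  have F0: "\<forall>s\<in>F. mu s = 0"
  proof
    fix s assume "s \<in> F"
    hence "r s \<noteq> r t" using insert.prems(1) insert.hyps(2) by (auto simp: inj_on_def)
    thus "mu s = 0" using h \<open>s \<in> F\<close> by auto
  qed
  have "mu t * r t ^ N = 0" using eq[of N] F0 by simp
  hence "mu t = 0" using insert.prems(2) by auto
  thus ?case using F0 by auto
qed



definition bb :: "'c::linordered_field list \<Rightarrow> nat \<Rightarrow> 'c" where
  "bb s n = (if n < length s then s ! n else rc s ^ n)"

definition supp :: "('c::linordered_field list \<Rightarrow> 'c) \<Rightarrow> 'c list set" where
  "supp l = {s. l s \<noteq> 0}"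

definition comb :: "('c::linordered_field list \<Rightarrow> 'c) \<Rightarrow> nat \<Rightarrow> 'c" where
  "comb l n = (\<Sum>s\<in>supp l. l s * bb s n)"

lemma indep:
  fixes mu :: "'c::linordered_field list \<Rightarrow> 'c"
  assumes "finite F" "\<forall>n. (\<Sum>s\<in>F. mu s * bb s n) = 0"
  shows "\<forall>s\<in>F. mu s = 0"
proof -
  define N where "N = Max (insert 0 (length ` F))"
  have "\<forall>n\<ge>N. (\<Sum>s\<in>F. mu s * rc s ^ n) = 0"
  proof (intro allI impI)
    fix n assume n: "n \<ge> N"
    have "\<forall>s\<in>F. bb s n = rc s ^ n"
    proof
      fix s assume "s \<in> F"
      hence "length s \<le> N" unfolding N_def using assms(1) by (auto intro: Max_ge)
      thus "bb s n = rc s ^ n" using n by (simp add: bb_def)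
    qed
    thus "(\<Sum>s\<in>F. mu s * rc s ^ n) = 0" using assms(2)[rule_format, of n]
      by (metis (no_types, lifting) sum.cong)
  qed
  thus ?thesis using vandermonde[of F rc N mu] assms(1) rc_nz
    by (auto simp: inj_on_def intro: rc_inj)
qed

lemma comb_F:
  assumes "finite F" "supp l \<subseteq> F"
  shows "comb l n = (\<Sum>s\<in>F. l s * bb s n)"
  unfolding comb_def
  by (rule sum.mono_neutral_left) (use assms in \<open>auto simp: supp_def\<close>)

lemma comb_inj:
  assumes "finite (supp l)" "finite (supp m)" "comb l = comb m"
  shows "l = m"
proof
  fix s
  define F where "F = supp l \<union> supp m"
  have fF: "finite F" using assms F_def by auto
  have sl: "supp l \<subseteq> F" and sm: "supp m \<subseteq> F" unfolding F_def by auto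
  have "\<forall>n. (\<Sum>t\<in>F. (l t - m t) * bb t n) = 0"
  proof
    fix n
    have "(\<Sum>t\<in>F. (l t - m t) * bb t n) = (\<Sum>t\<in>F. l t * bb t n) - (\<Sum>t\<in>F. m t * bb t n)"
      by (simp add: sum_subtractf left_diff_distrib)
    also have "\<dots> = comb l n - comb m n"
      using comb_F[OF fF sl, of n] comb_F[OF fF sm, of n] by simp
    finally show "(\<Sum>t\<in>F. (l t - m t) * bb t n) = 0" using assms(3) by simp
  qed
  hence h: "\<forall>t\<in>F. l t - m t = 0" by (rule indep[OF fF])
  show "l s = m s"
  proof (cases "s \<in> F")
    case True thus ?thesis using h by simp
  next
    case False
    hence "l s = 0" "m s = 0" using sl sm unfolding supp_def by blast+
    thus ?thesis by simp
  qed
qed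

definition GG :: "(nat \<Rightarrow> 'c::linordered_field) set" where
  "GG = {comb l | l. finite (supp l)}"

definition coef :: "(nat \<Rightarrow> 'c::linordered_field) \<Rightarrow> 'c list \<Rightarrow> 'c" where
  "coef x = (SOME l. finite (supp l) \<and> x = comb l)"

lemma coef_comb: assumes "finite (supp l)" shows "coef (comb l) = l"
proof -
  have "finite (supp (coef (comb l))) \<and> comb l = comb (coef (comb l))"
    unfolding coef_def by (rule someI[of _ l]) (use assms in auto)
  thus ?thesis using comb_inj assms by metis
qed

lemma GG_coef: assumes "x \<in> GG" shows "finite (supp (coef x))" "x = comb (coef x)"
proof -
  obtain l where l: "finite (supp l)" "x = comb l" using assms unfolding GG_def by auto
  show "finite (supp (coef x))" "x = comb (coef x)" using l coef_comb[OF l(1)] by auto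
qed

lemma comb_add: assumes "finite (supp l)" "finite (supp m)"
  shows "comb (\<lambda>s. l s + m s) = (\<lambda>n. comb l n + comb m n)" and "finite (supp (\<lambda>s. l s + m s))"
proof -
  define F where "F = supp l \<union> supp m"
  have fF: "finite F" using assms F_def by auto
  have sF: "supp (\<lambda>s. l s + m s) \<subseteq> F" by (auto simp: supp_def F_def)
  show "finite (supp (\<lambda>s. l s + m s))" using sF fF finite_subset by blast
  show "comb (\<lambda>s. l s + m s) = (\<lambda>n. comb l n + comb m n)"
  proof
    fix n
    show "comb (\<lambda>s. l s + m s) n = comb l n + comb m n"
      using comb_F[OF fF sF, of n] comb_F[OF fF, of l n] comb_F[OF fF, of m n] F_def
      by (simp add: sum.distrib algebra_simps)
  qed
qed

lemma comb_scale: assumes "finite (supp l)"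
  shows "comb (\<lambda>s. a * l s) = (\<lambda>n. a * comb l n)" and "finite (supp (\<lambda>s. a * l s))"
proof -
  have sF: "supp (\<lambda>s. a * l s) \<subseteq> supp l" by (auto simp: supp_def)
  show "finite (supp (\<lambda>s. a * l s))" using sF assms finite_subset by blast
  show "comb (\<lambda>s. a * l s) = (\<lambda>n. a * comb l n)"
  proof
    fix n
    show "comb (\<lambda>s. a * l s) n = a * comb l n"
      using comb_F[OF assms sF, of n] comb_F[OF assms, of l n]
      by (simp add: sum_distrib_left algebra_simps)
  qed
qed

lemma comb_delta: "comb (\<lambda>t. if t = s then 1 else 0) = bb s"
  and supp_delta: "supp (\<lambda>t. if t = s then (1::'c::linordered_field) else 0) = {s}"
proof -
  show sd: "supp (\<lambda>t. if t = s then (1::'c::linordered_field) else 0) = {s}" by (auto simp: supp_def)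
  show "comb (\<lambda>t. if t = s then 1 else 0) = bb s" by (rule ext) (simp add: comb_def sd)
qed

lemma comb_zero: "comb (\<lambda>t. 0) = (\<lambda>n. 0)" and supp_zero: "supp (\<lambda>t. 0) = {}"
  by (auto simp: comb_def supp_def)

lemma GG_add: "x \<in> GG \<Longrightarrow> y \<in> GG \<Longrightarrow> (\<lambda>n. x n + y n) \<in> GG \<and> coef (\<lambda>n. x n + y n) = (\<lambda>s. coef x s + coef y s)"
proof -
  assume x: "x \<in> GG" and y: "y \<in> GG"
  have e: "(\<lambda>n. x n + y n) = comb (\<lambda>s. coef x s + coef y s)"
    using comb_add(1)[of "coef x" "coef y"] GG_coef[OF x] GG_coef[OF y] by simp
  have f: "finite (supp (\<lambda>s. coef x s + coef y s))"
    using comb_add(2)[of "coef x" "coef y"] GG_coef[OF x] GG_coef[OF y] by simp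
  have "(\<lambda>n. x n + y n) \<in> GG" unfolding GG_def using e f by blast
  moreover have "coef (\<lambda>n. x n + y n) = (\<lambda>s. coef x s + coef y s)"
    unfolding e by (rule coef_comb[OF f])
  ultimately show ?thesis by blast
qed



lemma GG_scale: "x \<in> GG \<Longrightarrow> (\<lambda>n. a * x n) \<in> GG \<and> coef (\<lambda>n. a * x n) = (\<lambda>s. a * coef x s)"
proof -
  assume x: "x \<in> GG"
  have e: "(\<lambda>n. a * x n) = comb (\<lambda>s. a * coef x s)"
    using comb_scale(1)[of "coef x" a] GG_coef[OF x] by simp
  have f: "finite (supp (\<lambda>s. a * coef x s))"
    using comb_scale(2)[of "coef x" a] GG_coef[OF x] by simp
  have "(\<lambda>n. a * x n) \<in> GG" unfolding GG_def using e f by blast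
  moreover have "coef (\<lambda>n. a * x n) = (\<lambda>s. a * coef x s)"
    unfolding e by (rule coef_comb[OF f])
  ultimately show ?thesis by blast
qed

lemma GG_diff: "x \<in> GG \<Longrightarrow> y \<in> GG \<Longrightarrow> (\<lambda>n. y n - x n) \<in> GG \<and> coef (\<lambda>n. y n - x n) = (\<lambda>s. coef y s - coef x s)"
proof -
  assume x: "x \<in> GG" and y: "y \<in> GG"
  have nx: "(\<lambda>n. (-1) * x n) \<in> GG" "coef (\<lambda>n. (-1) * x n) = (\<lambda>s. (-1) * coef x s)"
    using GG_scale[OF x, of "-1"] by blast+
  have e1: "(\<lambda>n. y n - x n) = (\<lambda>n. y n + (\<lambda>n. (-1) * x n) n)" by simp
  have e2: "(\<lambda>s. coef y s - coef x s) = (\<lambda>s. coef y s + coef (\<lambda>n. (-1) * x n) s)" unfolding nx(2) by simp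
  show ?thesis unfolding e1 e2 by (rule GG_add[OF y nx(1)])
qed

lemma GG_zero: "(\<lambda>n. 0::'a::linordered_field) \<in> GG" and coef_zero: "coef (\<lambda>n. 0::'a) = (\<lambda>s. 0)"
proof -
  have f: "finite (supp (\<lambda>t::'a list. 0::'a::linordered_field))" by (simp add: supp_zero)
  have e: "(\<lambda>n. 0::'a) = comb (\<lambda>t. 0)" by (simp add: comb_zero)
  show "(\<lambda>n. 0::'a::linordered_field) \<in> GG" unfolding GG_def e using f by blast
  show "coef (\<lambda>n. 0::'a::linordered_field) = (\<lambda>s. 0)" unfolding e by (rule coef_comb[OF f])
qed

lemma GG_bb: "bb s \<in> GG" and coef_bb: "coef (bb s) = (\<lambda>t. if t = s then (1::'a::linordered_field) else 0)"
proof -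
  have f: "finite (supp (\<lambda>t. if t = s then (1::'a::linordered_field) else 0))" by (simp add: supp_delta)
  have e: "bb s = comb (\<lambda>t. if t = s then (1::'a) else 0)" by (simp add: comb_delta)
  show "bb s \<in> GG" unfolding GG_def e using f by blast
  show "coef (bb s) = (\<lambda>t. if t = s then (1::'a::linordered_field) else 0)" unfolding e by (rule coef_comb[OF f])
qed

lemma coef_eq0: "x \<in> GG \<Longrightarrow> coef x = (\<lambda>s. 0) \<Longrightarrow> x = (\<lambda>n. 0)"
proof -
  assume "x \<in> GG" "coef x = (\<lambda>s. 0)"
  hence "x = comb (\<lambda>s. 0)" using GG_coef(2)[of x] by simp
  thus ?thesis by (simp add: comb_zero)
qed

lemma bb_inj: "bb s = bb t \<Longrightarrow> s = t"
proof -
  assume "bb s = bb t"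
  hence "coef (bb s) s = coef (bb t) s" by simp
  thus "s = t" unfolding coef_bb by (cases "s = t") auto
qed

definition lexo :: "(nat \<Rightarrow> 'c::linordered_field) \<Rightarrow> (nat \<Rightarrow> 'c) \<Rightarrow> bool" where
  "lexo x y \<longleftrightarrow> (\<exists>n. (\<forall>m<n. x m = y m) \<and> x n < y n)"

lemma lex_irrefl: "\<not> lexo x x" by (auto simp: lexo_def)

lemma lex_trans: assumes "lexo x y" "lexo y z" shows "lexo x z"
proof -
  obtain n where n: "\<forall>m<n. x m = y m" "x n < y n" using assms(1) lexo_def by blast
  obtain k where k: "\<forall>m<k. y m = z m" "y k < z k" using assms(2) lexo_def by blast
  show ?thesis unfolding lexo_def
  proof (cases n k rule: linorder_cases)
    case less thus "\<exists>n. (\<forall>m<n. x m = z m) \<and> x n < z n" using n k by (intro exI[of _ n]) auto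
  next
    case equal thus "\<exists>n. (\<forall>m<n. x m = z m) \<and> x n < z n" using n k by (intro exI[of _ n]) auto
  next
    case greater thus "\<exists>n. (\<forall>m<n. x m = z m) \<and> x n < z n" using n k by (intro exI[of _ k]) auto
  qed
qed

lemma lex_total: assumes "x \<noteq> y" shows "lexo x y \<or> lexo y x"
proof -
  have "\<exists>n. x n \<noteq> y n" using assms by auto
  define n where "n = (LEAST n. x n \<noteq> y n)"
  have "x n \<noteq> y n" unfolding n_def by (rule LeastI_ex) fact
  moreover have "\<forall>m<n. x m = y m" unfolding n_def using not_less_Least by blast
  ultimately show ?thesis unfolding lexo_def
    by (cases "x n < y n") (auto intro!: exI[of _ n] simp: not_less_iff_gr_or_eq)
qed

lemma lex_add: "lexo x y \<Longrightarrow> lexo (\<lambda>n. x n + z n) (\<lambda>n. y n + z n)"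
  unfolding lexo_def by auto

lemma lex_scale: "0 < a \<Longrightarrow> lexo x y \<Longrightarrow> lexo (\<lambda>n. a * x n) (\<lambda>n. a * y n)"
  unfolding lexo_def by auto

lemma lex_diff: "lexo x y \<longleftrightarrow> lexo (\<lambda>n. x n - z n) (\<lambda>n. y n - z n)"
  unfolding lexo_def by auto



definition ismin :: "('c::linordered_field list \<Rightarrow> 'c) \<Rightarrow> 'c list \<Rightarrow> bool" where
  "ismin l s \<longleftrightarrow> l s \<noteq> 0 \<and> (\<forall>t. l t \<noteq> 0 \<longrightarrow> t \<noteq> s \<longrightarrow> lexo (bb s) (bb t))"

definition PP :: "('c::linordered_field list \<Rightarrow> 'c) \<Rightarrow> bool" where
  "PP l \<longleftrightarrow> (\<exists>s. ismin l s \<and> l s > 0)"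

lemma bb_lex_total: "s \<noteq> t \<Longrightarrow> lexo (bb s) (bb t) \<or> lexo (bb t) (bb s)"
  using lex_total[of "bb s" "bb t"] bb_inj[of s t] by auto

lemma bb_lex_asym: "lexo (bb s) (bb t) \<Longrightarrow> lexo (bb t) (bb s) \<Longrightarrow> False"
  using lex_irrefl lex_trans by metis

lemma min_set_ex:
  assumes "finite S" "S \<noteq> {}"
  shows "\<exists>s\<in>S. \<forall>t\<in>S. t \<noteq> s \<longrightarrow> lexo (bb s) (bb t)"
  using assms
proof (induction S rule: finite_ne_induct)
  case (singleton x) thus ?case by auto
next
  case (insert x F)
  then obtain s where s: "s \<in> F" "\<forall>t\<in>F. t \<noteq> s \<longrightarrow> lexo (bb s) (bb t)" by blast
  have "x \<noteq> s" using insert.hyps s by auto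
  then consider "lexo (bb s) (bb x)" | "lexo (bb x) (bb s)" using bb_lex_total by blast
  thus ?case
  proof cases
    case 1 thus ?thesis using s by auto
  next
    case 2
    have "\<forall>t\<in>insert x F. t \<noteq> x \<longrightarrow> lexo (bb x) (bb t)"
    proof (intro ballI impI)
      fix t assume "t \<in> insert x F" "t \<noteq> x"
      hence "t \<in> F" by simp
      show "lexo (bb x) (bb t)"
      proof (cases "t = s")
        case True thus ?thesis using 2 by simp
      next
        case False thus ?thesis using 2 s \<open>t \<in> F\<close> lex_trans by blast
      qed
    qed
    thus ?thesis by blast
  qed
qed

lemma min_ex:
  assumes "finite (supp l)" "l \<noteq> (\<lambda>s. 0)"
  shows "\<exists>s. ismin l s"
proof -
  have "supp l \<noteq> {}" using assms(2) by (auto simp: supp_def)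
  then obtain s where "s \<in> supp l" "\<forall>t\<in>supp l. t \<noteq> s \<longrightarrow> lexo (bb s) (bb t)"
    using min_set_ex[OF assms(1)] by blast
  thus ?thesis unfolding ismin_def supp_def by auto
qed

lemma min_unique: "ismin l s \<Longrightarrow> ismin l t \<Longrightarrow> s = t"
  unfolding ismin_def using bb_lex_asym by blast

lemma ismin_scale: "a \<noteq> 0 \<Longrightarrow> ismin (\<lambda>s. a * l s) s \<longleftrightarrow> ismin l s"
  unfolding ismin_def by auto

lemma PP_zero: "\<not> PP (\<lambda>s. 0)"
  unfolding PP_def by auto

lemma PP_scale: "0 < a \<Longrightarrow> PP l \<Longrightarrow> PP (\<lambda>s. a * l s)"
  unfolding PP_def using ismin_scale[of a l] by auto

lemma PP_total:
  assumes "finite (supp l)" "l \<noteq> (\<lambda>s. 0)"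
  shows "PP l \<or> PP (\<lambda>s. - l s)"
proof -
  obtain s where s: "ismin l s" using min_ex[OF assms] by blast
  have s2: "ismin (\<lambda>s. (-1) * l s) s" using ismin_scale[of "-1" l s] s by simp
  have "l s \<noteq> 0" using s ismin_def by blast
  thus ?thesis unfolding PP_def using s s2 by (cases "l s > 0") (auto intro!: exI[of _ s])
qed

lemma PP_add:
  assumes "PP l" "PP m"
  shows "PP (\<lambda>s. l s + m s)"
proof -
  obtain s where s: "ismin l s" "l s > 0" using assms(1) PP_def by blast
  obtain t where t: "ismin m t" "m t > 0" using assms(2) PP_def by blast
  have key: "PP (\<lambda>u. l u + m u)" if s: "ismin l s" "l s > 0" and t: "ismin m t" "m t > 0"
    and st: "s = t \<or> lexo (bb s) (bb t)" for l m :: "'a::linordered_field list \<Rightarrow> 'a" and s t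
  proof -
    have ms: "m s \<ge> 0"
    proof (cases "s = t")
      case True thus ?thesis using t by simp
    next
      case False
      hence "lexo (bb s) (bb t)" using st by simp
      hence "m s = 0" using t bb_lex_asym False unfolding ismin_def by blast
      thus ?thesis by simp
    qed
    have "ismin (\<lambda>u. l u + m u) s"
      unfolding ismin_def
    proof (intro conjI allI impI)
      show "l s + m s \<noteq> 0" using s ms by simp
      fix u assume u: "l u + m u \<noteq> 0" "u \<noteq> s"
      show "lexo (bb s) (bb u)"
      proof (cases "l u \<noteq> 0")
        case True thus ?thesis using s u unfolding ismin_def by blast
      next
        case False
        hence "m u \<noteq> 0" using u by simp
        hence "u = t \<or> lexo (bb t) (bb u)" using t unfolding ismin_def by blast
        thus ?thesis using st u lex_trans by blast
      qed
    qed
    thus ?thesis unfolding PP_def using s ms by (intro exI[of _ s]) simp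
  qed
  show ?thesis
  proof (cases "s = t \<or> lexo (bb s) (bb t)")
    case True thus ?thesis using key[OF s t] by blast
  next
    case False
    hence "t = s \<or> lexo (bb t) (bb s)" using bb_lex_total by blast
    hence "PP (\<lambda>u. m u + l u)" using key[OF t s] by blast
    thus ?thesis by (simp add: add.commute)
  qed
qed

lemma mono_core:
  assumes s: "ismin l s" "l s > 0" and d: "PP (\<lambda>u. m u - l u)" and t: "ismin m t"
  shows "t = s \<or> lexo (bb t) (bb s)"
proof (rule ccontr)
  assume nc: "\<not> (t = s \<or> lexo (bb t) (bb s))"
  hence st: "lexo (bb s) (bb t)" using bb_lex_total by blast
  have ms: "m s = 0" using t st bb_lex_asym nc unfolding ismin_def by blast
  obtain w where w: "ismin (\<lambda>u. m u - l u) w" "m w - l w > 0" using d PP_def by blast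
  have "w \<noteq> s" using w ms s by auto
  moreover have "m s - l s \<noteq> 0" using ms s by simp
  ultimately have ws: "lexo (bb w) (bb s)" using w unfolding ismin_def by blast
  have lw: "l w = 0"
  proof (rule ccontr)
    assume "l w \<noteq> 0"
    hence "lexo (bb s) (bb w)" using s \<open>w \<noteq> s\<close> unfolding ismin_def by blast
    thus False using ws bb_lex_asym by blast
  qed
  hence "m w \<noteq> 0" using w by simp
  hence "w = t \<or> lexo (bb t) (bb w)" using t unfolding ismin_def by blast
  thus False using ws st nc lex_trans by blast
qed



definition ltone :: "(nat \<Rightarrow> 'c::linordered_field) \<Rightarrow> (nat \<Rightarrow> 'c) \<Rightarrow> bool" where
  "ltone x y \<longleftrightarrow> PP (coef (\<lambda>n. y n - x n))"

definition lead :: "(nat \<Rightarrow> 'c::linordered_field) \<Rightarrow> 'c list" where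
  "lead x = (SOME s. ismin (coef x) s)"

definition vv :: "(nat \<Rightarrow> 'c::linordered_field) \<Rightarrow> (nat \<Rightarrow> 'c) option" where
  "vv x = (if x = (\<lambda>n. 0) then None else Some (bb (lead x)))"

definition addf :: "(nat \<Rightarrow> 'c::linordered_field) \<Rightarrow> (nat \<Rightarrow> 'c) \<Rightarrow> nat \<Rightarrow> 'c" where
  "addf x y = (\<lambda>n. x n + y n)"

definition scalf :: "'c::linordered_field \<Rightarrow> (nat \<Rightarrow> 'c) \<Rightarrow> nat \<Rightarrow> 'c" where
  "scalf a x = (\<lambda>n. a * x n)"

lemma ltone_GG: "x \<in> GG \<Longrightarrow> y \<in> GG \<Longrightarrow> ltone x y \<longleftrightarrow> PP (\<lambda>s. coef y s - coef x s)"
proof -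
  assume x: "x \<in> GG" and y: "y \<in> GG"
  have "coef (\<lambda>n. y n - x n) = (\<lambda>s. coef y s - coef x s)" using GG_diff[OF x y] by blast
  thus ?thesis unfolding ltone_def by simp
qed

lemma coef_nz: "x \<in> GG \<Longrightarrow> x \<noteq> (\<lambda>n. 0) \<Longrightarrow> coef x \<noteq> (\<lambda>s. 0)"
  using coef_eq0 by blast

lemma lead_min: assumes "x \<in> GG" "x \<noteq> (\<lambda>n. 0)" shows "ismin (coef x) (lead x)"
proof -
  have "\<exists>s. ismin (coef x) s" using min_ex GG_coef(1)[OF assms(1)] coef_nz[OF assms] by blast
  thus ?thesis unfolding lead_def by (rule someI_ex)
qed

lemma lead_eq: assumes "x \<in> GG" "ismin (coef x) s" shows "lead x = s"
proof -
  have "x \<noteq> (\<lambda>n. 0)" using assms(2) unfolding ismin_def by (auto simp: coef_zero)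
  thus ?thesis using lead_min[OF assms(1)] assms(2) min_unique by blast
qed

lemma ismin_delta: "ismin (\<lambda>t. if t = s then (1::'a::linordered_field) else 0) s"
  unfolding ismin_def by auto

lemma bb_nz: "bb s \<noteq> (\<lambda>n. 0::'a::linordered_field)"
proof
  assume "bb s = (\<lambda>n. 0::'a)"
  hence "coef (bb s) = coef (\<lambda>n. 0::'a)" by simp
  hence "(\<lambda>t. if t = s then (1::'a) else 0) = (\<lambda>t. 0)" unfolding coef_bb coef_zero .
  hence "(if s = s then (1::'a) else 0) = 0" by (rule fun_cong)
  thus False by simp
qed

lemma lead_bb: "lead (bb s :: nat \<Rightarrow> 'a::linordered_field) = s"
proof -
  have "ismin (coef (bb s :: nat \<Rightarrow> 'a)) s" unfolding coef_bb by (rule ismin_delta)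
  thus ?thesis by (rule lead_eq[OF GG_bb])
qed

lemma vv_bb: "vv (bb s :: nat \<Rightarrow> 'a::linordered_field) = Some (bb s)"
  unfolding vv_def by (simp add: bb_nz lead_bb)

lemma PP_delta: "PP (\<lambda>t. if t = s then (1::'a::linordered_field) else 0)"
  unfolding PP_def using ismin_delta by auto

lemma ltone_0_bb: "ltone (\<lambda>n. 0) (bb s :: nat \<Rightarrow> 'a::linordered_field)"
  using ltone_GG[OF GG_zero GG_bb] by (simp add: coef_bb coef_zero PP_delta)

lemma vs: "vector_space_on (GG::(nat \<Rightarrow> 'a::linordered_field) set) addf (\<lambda>n. 0) scalf"
proof -
  have inv: "\<forall>x\<in>(GG::(nat \<Rightarrow> 'a) set). \<exists>y\<in>GG. (\<lambda>n. x n + y n) = (\<lambda>n. 0)"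
  proof
    fix x :: "nat \<Rightarrow> 'a" assume x: "x \<in> GG"
    show "\<exists>y\<in>GG. (\<lambda>n. x n + y n) = (\<lambda>n. 0)"
    proof (rule bexI[of _ "\<lambda>n. (-1) * x n"])
      show "(\<lambda>n. (-1) * x n) \<in> GG" using GG_scale[OF x] by blast
    qed simp
  qed
  show ?thesis
    unfolding vector_space_on_def addf_def scalf_def
  proof (intro conjI)
    show "\<forall>x\<in>(GG::(nat \<Rightarrow> 'a) set). \<forall>y\<in>GG. (\<lambda>n. x n + y n) \<in> GG" using GG_add by blast
    show "\<forall>(a::'a). \<forall>x\<in>GG. (\<lambda>n. a * x n) \<in> GG" using GG_scale by blast
  qed (use GG_zero inv in \<open>auto simp: algebra_simps\<close>)
qed



lemma ovs0: "ordered_vector_space_on (GG::(nat \<Rightarrow> 'a::linordered_field) set) addf (\<lambda>n. 0) scalf lexo"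
  unfolding ordered_vector_space_on_def strict_total_order_on_def
proof (intro conjI ballI allI impI)
  show "vector_space_on (GG::(nat \<Rightarrow> 'a::linordered_field) set) addf (\<lambda>n. 0) scalf" by (rule vs)
  fix x y z :: "nat \<Rightarrow> 'a" and a :: 'a
  show "\<not> lexo x x" by (rule lex_irrefl)
  show "lexo x y \<Longrightarrow> lexo y z \<Longrightarrow> lexo x z" by (rule lex_trans)
  show "x \<noteq> y \<Longrightarrow> lexo x y \<or> lexo y x" by (rule lex_total)
  show "lexo x y \<Longrightarrow> lexo (addf x z) (addf y z)" unfolding addf_def by (rule lex_add)
  show "0 < a \<Longrightarrow> lexo x y \<Longrightarrow> lexo (scalf a x) (scalf a y)" unfolding scalf_def by (rule lex_scale)
qed

lemma ltone_trans: "x \<in> GG \<Longrightarrow> y \<in> GG \<Longrightarrow> z \<in> GG \<Longrightarrow> ltone x y \<Longrightarrow> ltone y z \<Longrightarrow> ltone x z"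
proof -
  assume x: "x \<in> GG" and y: "y \<in> GG" and z: "z \<in> GG" and "ltone x y" "ltone y z"
  hence "PP (\<lambda>s. coef y s - coef x s)" "PP (\<lambda>s. coef z s - coef y s)" using ltone_GG by blast+
  hence "PP (\<lambda>s. (coef z s - coef y s) + (coef y s - coef x s))" using PP_add by blast
  thus "ltone x z" using ltone_GG[OF x z] by simp
qed

lemma ltone_irrefl: "x \<in> GG \<Longrightarrow> \<not> ltone x x"
  using ltone_GG PP_zero by fastforce

lemma ltone_total: assumes x: "x \<in> GG" and y: "y \<in> GG" and ne: "x \<noteq> y" shows "ltone x y \<or> ltone y x"
proof -
  have d: "(\<lambda>n. y n - x n) \<in> GG" "coef (\<lambda>n. y n - x n) = (\<lambda>s. coef y s - coef x s)" using GG_diff[OF x y] by blast+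
  have "(\<lambda>n. y n - x n) \<noteq> (\<lambda>n. 0)" using ne by (metis eq_iff_diff_eq_0 ext)
  hence "(\<lambda>s. coef y s - coef x s) \<noteq> (\<lambda>s. 0)" using coef_nz[OF d(1)] d(2) by simp
  moreover have "finite (supp (\<lambda>s. coef y s - coef x s))" using GG_coef(1)[OF d(1)] d(2) by simp
  ultimately have "PP (\<lambda>s. coef y s - coef x s) \<or> PP (\<lambda>s. - (coef y s - coef x s))" using PP_total by blast
  thus ?thesis using ltone_GG[OF x y] ltone_GG[OF y x] by simp
qed

lemma ltone_add: assumes x: "x \<in> GG" and y: "y \<in> GG" and z: "z \<in> GG" and l: "ltone x y"
  shows "ltone (\<lambda>n. x n + z n) (\<lambda>n. y n + z n)"
proof -
  have "(\<lambda>n. (y n + z n) - (x n + z n)) = (\<lambda>n. y n - x n)" by simp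
  thus ?thesis using l unfolding ltone_def by simp
qed

lemma ltone_scale: assumes x: "x \<in> GG" and y: "y \<in> GG" and a: "0 < a" and l: "ltone x y"
  shows "ltone (\<lambda>n. a * x n) (\<lambda>n. a * y n)"
proof -
  have d: "(\<lambda>n. y n - x n) \<in> GG" using GG_diff[OF x y] by blast
  have e: "(\<lambda>n. a * y n - a * x n) = (\<lambda>n. a * (\<lambda>n. y n - x n) n)" by (simp add: algebra_simps)
  have "coef (\<lambda>n. a * y n - a * x n) = (\<lambda>s. a * coef (\<lambda>n. y n - x n) s)"
    unfolding e using GG_scale[OF d] by blast
  thus ?thesis using l a PP_scale unfolding ltone_def by auto
qed

lemma ovs1: "ordered_vector_space_on (GG::(nat \<Rightarrow> 'a::linordered_field) set) addf (\<lambda>n. 0) scalf ltone"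
  unfolding ordered_vector_space_on_def strict_total_order_on_def
proof (intro conjI ballI allI impI)
  show "vector_space_on (GG::(nat \<Rightarrow> 'a::linordered_field) set) addf (\<lambda>n. 0) scalf" by (rule vs)
  fix x y z :: "nat \<Rightarrow> 'a" and a :: 'a
  assume x: "x \<in> GG" and y: "y \<in> GG"
  show "\<not> ltone x x" by (rule ltone_irrefl[OF x])
  show "x \<noteq> y \<Longrightarrow> ltone x y \<or> ltone y x" by (rule ltone_total[OF x y])
  show "0 < a \<Longrightarrow> ltone x y \<Longrightarrow> ltone (scalf a x) (scalf a y)" unfolding scalf_def by (rule ltone_scale[OF x y])
  assume z: "z \<in> GG"
  show "ltone x y \<Longrightarrow> ltone y z \<Longrightarrow> ltone x z" by (rule ltone_trans[OF x y z])
  show "ltone x y \<Longrightarrow> ltone (addf x z) (addf y z)" unfolding addf_def by (rule ltone_add[OF x y z])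
qed



lemma inf_le_None: "inf_le lt a None"
  by (cases a) (auto simp: inf_le_def)

lemma inf_le_Some: "x = y \<or> lt x y \<Longrightarrow> inf_le lt (Some x) (Some y)"
  by (auto simp: inf_le_def)

lemma vv_ultra:
  assumes x: "x \<in> GG" and y: "y \<in> GG"
  shows "inf_le lexo (vv x) (vv (addf x y)) \<or> inf_le lexo (vv y) (vv (addf x y))"
proof -
  have z: "addf x y \<in> GG" "coef (addf x y) = (\<lambda>s. coef x s + coef y s)"
    using GG_add[OF x y] unfolding addf_def by blast+
  show ?thesis
  proof (cases "addf x y = (\<lambda>n. 0)")
    case True thus ?thesis by (simp add: vv_def inf_le_None)
  next
    case zn: False
    show ?thesis
    proof (cases "x = (\<lambda>n. 0)")
      case True
      hence "addf x y = y" unfolding addf_def by simp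
      thus ?thesis by (simp add: inf_le_def)
    next
      case xn: False
      show ?thesis
      proof (cases "y = (\<lambda>n. 0)")
        case True
        hence "addf x y = x" unfolding addf_def by simp
        thus ?thesis by (simp add: inf_le_def)
      next
        case yn: False
        define u where "u = lead (addf x y)"
        have u: "ismin (coef (addf x y)) u" unfolding u_def by (rule lead_min[OF z(1) zn])
        hence "coef x u + coef y u \<noteq> 0" unfolding ismin_def z(2) by simp
        hence "coef x u \<noteq> 0 \<or> coef y u \<noteq> 0" by auto
        thus ?thesis
        proof
          assume cu: "coef x u \<noteq> 0"
          have "ismin (coef x) (lead x)" by (rule lead_min[OF x xn])
          hence "u = lead x \<or> lexo (bb (lead x)) (bb u)" using cu unfolding ismin_def by blast
          hence "inf_le lexo (vv x) (vv (addf x y))"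
            unfolding vv_def u_def using xn zn by (auto intro!: inf_le_Some)
          thus ?thesis by blast
        next
          assume cu: "coef y u \<noteq> 0"
          have "ismin (coef y) (lead y)" by (rule lead_min[OF y yn])
          hence "u = lead y \<or> lexo (bb (lead y)) (bb u)" using cu unfolding ismin_def by blast
          hence "inf_le lexo (vv y) (vv (addf x y))"
            unfolding vv_def u_def using yn zn by (auto intro!: inf_le_Some)
          thus ?thesis by blast
        qed
      qed
    qed
  qed
qed

lemma vv_scale:
  assumes x: "x \<in> GG" and a: "a \<noteq> 0"
  shows "vv (scalf a x) = vv x"
proof (cases "x = (\<lambda>n. 0)")
  case True thus ?thesis unfolding vv_def scalf_def by simp
next
  case False
  then obtain n where "x n \<noteq> 0" by auto
  hence sn: "scalf a x \<noteq> (\<lambda>n. 0)" using a unfolding scalf_def by (metis mult_eq_0_iff)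
  have s: "scalf a x \<in> GG" "coef (scalf a x) = (\<lambda>s. a * coef x s)" using GG_scale[OF x] unfolding scalf_def by blast+
  have "ismin (coef x) (lead x)" by (rule lead_min[OF x False])
  hence "ismin (coef (scalf a x)) (lead x)" unfolding s(2) using ismin_scale[OF a] by blast
  hence "lead (scalf a x) = lead x" by (rule lead_eq[OF s(1)])
  thus ?thesis unfolding vv_def using sn False by simp
qed

lemma PP_min_pos: "PP l \<Longrightarrow> ismin l s \<Longrightarrow> l s > 0"
  unfolding PP_def using min_unique by blast

lemma vv_mono:
  assumes x: "x \<in> GG" and y: "y \<in> GG" and l0: "ltone (\<lambda>n. 0) x" and l: "ltone x y"
  shows "inf_le lexo (vv y) (vv x)"
proof -
  have px: "PP (coef x)" using ltone_GG[OF GG_zero x] l0 by (simp add: coef_zero)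
  have l0y: "ltone (\<lambda>n. 0) y" using ltone_trans[OF GG_zero x y l0 l] .
  have py: "PP (coef y)" using ltone_GG[OF GG_zero y] l0y by (simp add: coef_zero)
  have xn: "x \<noteq> (\<lambda>n. 0)" using px PP_zero by (auto simp: coef_zero)
  have yn: "y \<noteq> (\<lambda>n. 0)" using py PP_zero by (auto simp: coef_zero)
  have sx: "ismin (coef x) (lead x)" by (rule lead_min[OF x xn])
  have ty: "ismin (coef y) (lead y)" by (rule lead_min[OF y yn])
  have d: "PP (\<lambda>s. coef y s - coef x s)" using ltone_GG[OF x y] l by simp
  have "lead y = lead x \<or> lexo (bb (lead y)) (bb (lead x))"
    by (rule mono_core[OF sx PP_min_pos[OF px sx] d ty])
  thus ?thesis unfolding vv_def using xn yn by (auto intro!: inf_le_Some)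
qed

lemma vv_idem: "v_ext vv (vv x) = vv x"
  by (cases "x = (\<lambda>n. 0)") (auto simp: vv_def vv_bb bb_nz lead_bb)

lemma vv_pos: "inf_less ltone (Some (\<lambda>n. 0)) (vv x)"
  by (cases "x = (\<lambda>n. 0)") (auto simp: vv_def ltone_0_bb)

lemma hv: "hamel_valuation (GG::(nat \<Rightarrow> 'a::linordered_field) set) addf (\<lambda>n. 0) scalf lexo ltone vv"
  unfolding hamel_valuation_def
proof (intro conjI ballI allI impI)
  fix x y :: "nat \<Rightarrow> 'a" and a :: 'a
  assume x: "x \<in> GG"
  show "vv x = None \<or> (\<exists>g\<in>GG. vv x = Some g)" unfolding vv_def using GG_bb by auto
  show "(vv x = None) = (x = (\<lambda>n. 0))" unfolding vv_def by auto
  show "a \<noteq> 0 \<Longrightarrow> vv (scalf a x) = vv x" by (rule vv_scale[OF x])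
  show "v_ext vv (vv x) = vv x" by (rule vv_idem)
  show "inf_less ltone (Some (\<lambda>n. 0)) (vv x)" by (rule vv_pos)
  assume y: "y \<in> GG"
  show "inf_le lexo (vv x) (vv (addf x y)) \<or> inf_le lexo (vv y) (vv (addf x y))" by (rule vv_ultra[OF x y])
  show "ltone (\<lambda>n. 0) x \<Longrightarrow> ltone x y \<Longrightarrow> inf_le lexo (vv y) (vv x)" by (rule vv_mono[OF x y])
qed



lemma bb_prefix: "k < length u \<Longrightarrow> bb u k = u ! k"
  by (simp add: bb_def)

lemma between:
  assumes "lexo p q"
  shows "\<exists>u. lexo p (bb u) \<and> lexo (bb u) q"
proof -
  obtain j where j: "\<forall>m<j. p m = q m" "p j < q j" using assms lexo_def by blast
  define mid where "mid = (p j + q j) / 2"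
  have mid: "p j < mid" "mid < q j" using j(2) unfolding mid_def by (auto simp: field_simps)
  define u where "u = map p [0..<j] @ [mid]"
  have lu: "length u = Suc j" unfolding u_def by simp
  have um: "bb u m = p m" if "m < j" for m
    using that lu bb_prefix[of m u] unfolding u_def by (simp add: nth_append)
  have uj: "bb u j = mid" using lu bb_prefix[of j u] unfolding u_def by (simp add: nth_append)
  have "lexo p (bb u)" unfolding lexo_def using um uj mid by (intro exI[of _ j]) auto
  moreover have "lexo (bb u) q" unfolding lexo_def using um uj mid j(1) by (intro exI[of _ j]) auto
  ultimately show ?thesis by blast
qed

lemma dense: "dense_hamel (GG::(nat \<Rightarrow> 'a::linordered_field) set) lexo vv"
  unfolding dense_hamel_def
proof (intro ballI impI)
  fix a b :: "nat \<Rightarrow> 'a" assume "lexo a b"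
  then obtain u where "lexo a (bb u)" "lexo (bb u) b" using between by blast
  thus "\<exists>c\<in>GG. inf_less lexo (Some a) (vv c) \<and> inf_less lexo (vv c) (Some b)"
    by (intro bexI[of _ "bb u"]) (auto simp: GG_bb vv_bb)
qed



lemma indep_core:
  fixes a0 b0 a1 b1 :: "nat \<Rightarrow> 'a::linordered_field"
  assumes G: "a0 \<in> GG" "b0 \<in> GG" "a1 \<in> GG" "b1 \<in> GG"
    and l0: "lexo a0 b0" and l1: "ltone a1 b1"
  shows "\<exists>z\<in>GG. lexo a0 z \<and> lexo z b0 \<and> ltone a1 z \<and> ltone z b1"
proof -
  define c where "c = (\<lambda>n. a0 n - a1 n)"
  define e where "e = (\<lambda>n. b0 n - a1 n)"
  have "lexo c e" using l0 lex_diff unfolding c_def e_def by blast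
  then obtain j where j: "\<forall>m<j. c m = e m" "c j < e j" using lexo_def by blast
  define d1 where "d1 = (\<lambda>n. b1 n - a1 n)"
  have d1: "d1 \<in> GG" "coef d1 = (\<lambda>s. coef b1 s - coef a1 s)" using GG_diff[OF G(3) G(4)] unfolding d1_def by blast+
  have pd: "PP (coef d1)" using l1 unfolding ltone_def d1_def .
  have d1n: "d1 \<noteq> (\<lambda>n. 0)" using pd PP_zero by (auto simp: coef_zero)
  define \<beta> where "\<beta> = lead d1"
  have \<beta>: "ismin (coef d1) \<beta>" unfolding \<beta>_def by (rule lead_min[OF d1(1) d1n])
  have \<beta>pos: "coef d1 \<beta> > 0" by (rule PP_min_pos[OF pd \<beta>])
  define u where "u = (\<lambda>k. if k < j then c k else (c j + e j) / 2)"
  have uj: "c j < u j" "u j < e j" using j(2) unfolding u_def by (auto simp: field_simps)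
  define T where "T = \<bar>bb \<beta> 0\<bar> + \<bar>u 0\<bar> + 1"
  have T: "bb \<beta> 0 < T" "u 0 < T" "0 < T" unfolding T_def by (auto simp: abs_if)
  define \<mu> where "\<mu> = (u 0 - T) / (T + 1)"
  have \<mu>: "\<mu> \<noteq> 0" using T unfolding \<mu>_def by auto
  have \<mu>eq: "T + \<mu> * (T + 1) = u 0" using T unfolding \<mu>_def by (simp add: field_simps)
  define t1 where "t1 = T # replicate j 0"
  define t2 where "t2 = (T + 1) # map (\<lambda>k. u k / \<mu>) [1..<Suc j]"
  have lt: "length t1 = Suc j" "length t2 = Suc j" unfolding t1_def t2_def by auto
  have t10: "bb t1 0 = T" and t20: "bb t2 0 = T + 1"
    using lt unfolding bb_def t1_def t2_def by auto
  have t1k: "bb t1 k = 0" if "0 < k" "k \<le> j" for k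
    using that lt unfolding bb_def t1_def by (cases k) auto
  have t2k: "bb t2 k = u k / \<mu>" if "0 < k" "k \<le> j" for k
    using that lt unfolding bb_def t2_def by (cases k) (auto simp del: upt_Suc)
  define w where "w = (\<lambda>n. bb t1 n + \<mu> * bb t2 n)"
  have wu: "w k = u k" if "k \<le> j" for k
  proof (cases "k = 0")
    case True thus ?thesis unfolding w_def using t10 t20 \<mu>eq by simp
  next
    case False thus ?thesis unfolding w_def using t1k t2k that \<mu> by simp
  qed
  have cw: "lexo c w" unfolding lexo_def
    using wu uj unfolding u_def by (intro exI[of _ j]) auto
  have we: "lexo w e" unfolding lexo_def
    using wu uj j(1) unfolding u_def by (intro exI[of _ j]) auto
  have s2: "(\<lambda>n. \<mu> * bb t2 n) \<in> GG" "coef (\<lambda>n. \<mu> * bb t2 n) = (\<lambda>s. \<mu> * coef (bb t2) s)"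
    using GG_scale[OF GG_bb] by blast+
  have wG: "w \<in> GG" "coef w = (\<lambda>s. coef (bb t1) s + coef (\<lambda>n. \<mu> * bb t2 n) s)"
    using GG_add[OF GG_bb s2(1)] unfolding w_def by blast+
  have l12: "lexo (bb t1) (bb t2)" unfolding lexo_def using t10 t20 by (intro exI[of _ 0]) auto
  have t12: "t1 \<noteq> t2" using l12 lex_irrefl by blast
  have cwf: "coef w = (\<lambda>s. (if s = t1 then 1 else 0) + \<mu> * (if s = t2 then 1 else 0))"
    unfolding wG(2) s2(2) coef_bb ..
  have wmin: "ismin (coef w) t1" unfolding ismin_def cwf using t12 l12 by auto
  have pw: "PP (coef w)" unfolding PP_def using wmin t12 by (intro exI[of _ t1]) (simp add: cwf)
  have b1: "lexo (bb \<beta>) (bb t1)" unfolding lexo_def using t10 T by (intro exI[of _ 0]) auto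
  have b2: "lexo (bb \<beta>) (bb t2)" unfolding lexo_def using t20 T by (intro exI[of _ 0]) auto
  have \<beta>t: "\<beta> \<noteq> t1" "\<beta> \<noteq> t2" using b1 b2 lex_irrefl by blast+
  define d2 where "d2 = (\<lambda>n. d1 n - w n)"
  have d2: "d2 \<in> GG" "coef d2 = (\<lambda>s. coef d1 s - coef w s)" using GG_diff[OF wG(1) d1(1)] unfolding d2_def by blast+
  have "ismin (coef d2) \<beta>" unfolding ismin_def d2(2)
  proof (intro conjI allI impI)
    show "coef d1 \<beta> - coef w \<beta> \<noteq> 0" using \<beta>pos \<beta>t by (simp add: cwf)
    fix t assume t: "coef d1 t - coef w t \<noteq> 0" "t \<noteq> \<beta>"
    show "lexo (bb \<beta>) (bb t)"
    proof (cases "coef d1 t = 0")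
      case True
      hence "coef w t \<noteq> 0" using t by simp
      hence "t = t1 \<or> t = t2" by (auto simp: cwf split: if_splits)
      thus ?thesis using b1 b2 by blast
    next
      case False thus ?thesis using \<beta> t unfolding ismin_def by blast
    qed
  qed
  hence pd2: "PP (coef d2)" unfolding PP_def using \<beta>pos \<beta>t by (intro exI[of _ \<beta>]) (simp add: d2(2) cwf)
  define z where "z = (\<lambda>n. a1 n + w n)"
  have zG: "z \<in> GG" using GG_add[OF G(3) wG(1)] unfolding z_def by blast
  have "ltone a1 z" unfolding ltone_def z_def using pw by simp
  moreover have "ltone z b1"
  proof -
    have "(\<lambda>n. b1 n - z n) = d2" unfolding z_def d2_def d1_def by (simp add: algebra_simps)
    thus ?thesis unfolding ltone_def using pd2 by simp
  qed
  moreover have "lexo a0 z"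
  proof -
    have "lexo (\<lambda>n. a0 n - a1 n) (\<lambda>n. z n - a1 n)" using cw unfolding c_def z_def by simp
    thus ?thesis using lex_diff by blast
  qed
  moreover have "lexo z b0"
  proof -
    have "lexo (\<lambda>n. z n - a1 n) (\<lambda>n. b0 n - a1 n)" using we unfolding e_def z_def by simp
    thus ?thesis using lex_diff by blast
  qed
  ultimately show ?thesis using zG by blast
qed



lemma ext_reduce:
  assumes a: "in_ext G a" and b: "in_ext G b" and ab: "ext_less lt a b"
    and up: "\<forall>x\<in>G. \<exists>y\<in>G. lt x y" and down: "\<forall>x\<in>G. \<exists>y\<in>G. lt y x" and ne: "x0 \<in> G"
  shows "\<exists>a'\<in>G. \<exists>b'\<in>G. lt a' b' \<and> (\<forall>z. lt a' z \<longrightarrow> lt z b' \<longrightarrow> ext_less lt a (Fin z) \<and> ext_less lt (Fin z) b)"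
proof (cases a)
  case NegInf
  show ?thesis
  proof (cases b)
    case NegInf thus ?thesis using ab \<open>a = NegInf\<close> by simp
  next
    case (Fin y)
    hence y: "y \<in> G" using b unfolding in_ext_def by simp
    then obtain y' where "y' \<in> G" "lt y' y" using down by blast
    thus ?thesis using y Fin \<open>a = NegInf\<close> by auto
  next
    case PosInf
    obtain y where "y \<in> G" "lt x0 y" using up ne by blast
    thus ?thesis using ne PosInf \<open>a = NegInf\<close> by auto
  qed
next
  case (Fin x)
  hence x: "x \<in> G" using a unfolding in_ext_def by simp
  show ?thesis
  proof (cases b)
    case NegInf thus ?thesis using ab Fin by simp
  next
    case (Fin y)
    hence y: "y \<in> G" using b unfolding in_ext_def by simp
    thus ?thesis using x y Fin \<open>a = Fin x\<close> ab by auto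
  next
    case PosInf
    obtain y where "y \<in> G" "lt x y" using up x by blast
    thus ?thesis using x PosInf \<open>a = Fin x\<close> by auto
  qed
next
  case PosInf thus ?thesis using ab by (cases b) auto
qed

definition e1 :: "nat \<Rightarrow> 'a::linordered_field" where "e1 = bb [1]"

lemma lexo_e1: "lexo (\<lambda>n. 0) (e1 :: nat \<Rightarrow> 'a::linordered_field)"
  unfolding lexo_def e1_def by (intro exI[of _ 0]) (simp add: bb_def)

lemma up0: "\<forall>x\<in>(GG::(nat \<Rightarrow> 'a::linordered_field) set). \<exists>y\<in>GG. lexo x y"
proof
  fix x :: "nat \<Rightarrow> 'a" assume x: "x \<in> GG"
  have "(\<lambda>n. x n + e1 n) \<in> GG" using GG_add[OF x GG_bb] unfolding e1_def by blast
  moreover have "lexo x (\<lambda>n. x n + e1 n)"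
    using lex_add[OF lexo_e1, of x] by (simp add: add.commute)
  ultimately show "\<exists>y\<in>GG. lexo x y" by blast
qed

lemma down0: "\<forall>x\<in>(GG::(nat \<Rightarrow> 'a::linordered_field) set). \<exists>y\<in>GG. lexo y x"
proof
  fix x :: "nat \<Rightarrow> 'a" assume x: "x \<in> GG"
  have "(\<lambda>n. x n - e1 n) \<in> GG" using GG_diff[OF GG_bb x] unfolding e1_def by blast
  moreover have "lexo (\<lambda>n. x n - e1 n) x"
    using lex_add[OF lexo_e1, of "\<lambda>n. x n - e1 n"] by simp
  ultimately show "\<exists>y\<in>GG. lexo y x" by blast
qed

lemma up1: "\<forall>x\<in>(GG::(nat \<Rightarrow> 'a::linordered_field) set). \<exists>y\<in>GG. ltone x y"
proof
  fix x :: "nat \<Rightarrow> 'a" assume x: "x \<in> GG"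
  have "(\<lambda>n. x n + e1 n) \<in> GG" using GG_add[OF x GG_bb] unfolding e1_def by blast
  moreover have "ltone x (\<lambda>n. x n + e1 n)"
    using ltone_0_bb unfolding ltone_def e1_def by simp
  ultimately show "\<exists>y\<in>GG. ltone x y" by blast
qed

lemma down1: "\<forall>x\<in>(GG::(nat \<Rightarrow> 'a::linordered_field) set). \<exists>y\<in>GG. ltone y x"
proof
  fix x :: "nat \<Rightarrow> 'a" assume x: "x \<in> GG"
  have "(\<lambda>n. x n - e1 n) \<in> GG" using GG_diff[OF GG_bb x] unfolding e1_def by blast
  moreover have "ltone (\<lambda>n. x n - e1 n) x"
    using ltone_0_bb unfolding ltone_def e1_def by simp
  ultimately show "\<exists>y\<in>GG. ltone y x" by blast
qed

lemma indep_GG: "independent (GG::(nat \<Rightarrow> 'a::linordered_field) set) lexo ltone"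
  unfolding independent_def
proof (intro allI impI)
  fix a0 b0 a1 b1 :: "(nat \<Rightarrow> 'a) ext"
  assume h: "in_ext GG a0" "in_ext GG b0" "in_ext GG a1" "in_ext GG b1" "ext_less lexo a0 b0" "ext_less ltone a1 b1"
  obtain a0' b0' where r0: "a0' \<in> GG" "b0' \<in> GG" "lexo a0' b0'"
    "\<forall>z. lexo a0' z \<longrightarrow> lexo z b0' \<longrightarrow> ext_less lexo a0 (Fin z) \<and> ext_less lexo (Fin z) b0"
    using ext_reduce[OF h(1) h(2) h(5) up0 down0 GG_zero] by blast
  obtain a1' b1' where r1: "a1' \<in> GG" "b1' \<in> GG" "ltone a1' b1'"
    "\<forall>z. ltone a1' z \<longrightarrow> ltone z b1' \<longrightarrow> ext_less ltone a1 (Fin z) \<and> ext_less ltone (Fin z) b1"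
    using ext_reduce[OF h(3) h(4) h(6) up1 down1 GG_zero] by blast
  obtain z where "z \<in> GG" "lexo a0' z" "lexo z b0'" "ltone a1' z" "ltone z b1'"
    using indep_core[OF r0(1,2) r1(1,2) r0(3) r1(3)] by blast
  thus "\<exists>z\<in>GG. ext_less lexo a0 (Fin z) \<and> ext_less lexo (Fin z) b0 \<and>
               ext_less ltone a1 (Fin z) \<and> ext_less ltone (Fin z) b1"
    using r0(4) r1(4) by blast
qed

theorem lemma4p8:
  shows "\<exists>(G :: (nat \<Rightarrow> 'c::linordered_field) set) add zero (scal :: 'c \<Rightarrow> _) lt0 lt1 v.
           independent_dense_hamel_space G add zero scal lt0 lt1 v"
proof -
  have "independent_dense_hamel_space (GG::(nat \<Rightarrow> 'c) set) addf (\<lambda>n. 0) scalf lexo ltone vv"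
    unfolding independent_dense_hamel_space_def hamel_space_def
    using ovs0 ovs1 hv indep_GG dense by blast
  thus ?thesis by blast
qed

end
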